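(* Let $C$ be a closed normal cone with nonempty interior in a real Banach space $(X,\|\cdot\|)$. Fix $u\in\operatorname{int}C$ and let $\|\cdot\|_u$ be the order-unit norm. If $f:\operatorname{int}C\to C$ is order-preserving and homogeneous, then $$r(f)=\lim_{k\to\infty}\|(f+\operatorname{id})^k(u)\|_u^{1/k}-1=\inf_{k>0}\|(f+\operatorname{id})^k(u)\|_u^{1/k}-1=\lim_{k\to\infty}\|(f+\operatorname{id})^k(u)\|^{1/k}-1.$$ In particular, $r(f)<1$ if and only if there is $k\in\mathbb{N}$ with $(f+\operatorname{id})^k(u)\ll 2^ku$.
   Context: A closed cone $C$ (closed convex, $\lambda C\subseteq C$ for $\lambda\ge0$, $C\cap(-C)=\{0\}$) induces the order $x\le y$ iff $y-x\in C$; $x\ll y$ means $y-x\in\operatorname{int}C$. $C$ is normal if there is $\kappa$ with $\|x\|\le\kappa\|y\|$ whenever $0\le x\le y$. The order-unit norm is $\|x\|_u=\inf\{k>0: -ku\le x\le ku\}$ (on $X_u=\bigcup_{k>0}[-ku,ku]$, which equals $X$ when $u\in\operatorname{int}C$). $f$ is order-preserving if $x\le y\Rightarrow f(x)\le f(y)$; homogeneous if $f(tx)=tf(x)$ for $t>0$. $r(f)=\inf_{x\in\operatorname{int}C}M(f(x)/x)$ with $M(x/y)=\inf\{\beta>0:x\le\beta y\}$. *)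

theory Defs
  imports "HOL-Analysis.Analysis"
begin

definition closed_cone :: "'a::real_normed_vector set \<Rightarrow> bool" where
  "closed_cone C \<longleftrightarrow> closed C \<and> convex C \<and> C \<noteq> {} \<and>
     (\<forall>x\<in>C. \<forall>t::real. t \<ge> 0 \<longrightarrow> t *\<^sub>R x \<in> C) \<and>
     (\<forall>x. x \<in> C \<and> - x \<in> C \<longrightarrow> x = 0)"

definition cle :: "'a::real_normed_vector set \<Rightarrow> 'a \<Rightarrow> 'a \<Rightarrow> bool" where
  "cle C x y \<longleftrightarrow> y - x \<in> C"

definition cll :: "'a::real_normed_vector set \<Rightarrow> 'a \<Rightarrow> 'a \<Rightarrow> bool" where
  "cll C x y \<longleftrightarrow> y - x \<in> interior C"

definition normal_cone :: "'a::real_normed_vector set \<Rightarrow> bool" where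
  "normal_cone C \<longleftrightarrow> (\<exists>\<kappa>. \<forall>x y. cle C 0 x \<and> cle C x y \<longrightarrow> norm x \<le> \<kappa> * norm y)"

definition unorm :: "'a::real_normed_vector set \<Rightarrow> 'a \<Rightarrow> 'a \<Rightarrow> real" where
  "unorm C u x = Inf {k. k > 0 \<and> cle C (- (k *\<^sub>R u)) x \<and> cle C x (k *\<^sub>R u)}"

definition Mx :: "'a::real_normed_vector set \<Rightarrow> 'a \<Rightarrow> 'a \<Rightarrow> real" where
  "Mx C x y = Inf {\<beta>. \<beta> > 0 \<and> cle C x (\<beta> *\<^sub>R y)}"

definition order_preserving_on :: "'a::real_normed_vector set \<Rightarrow> 'a set \<Rightarrow> ('a \<Rightarrow> 'a) \<Rightarrow> bool" where
  "order_preserving_on C D f \<longleftrightarrow> (\<forall>x\<in>D. \<forall>y\<in>D. cle C x y \<longrightarrow> cle C (f x) (f y))"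

definition homogeneous_on :: "'a::real_normed_vector set \<Rightarrow> ('a \<Rightarrow> 'a) \<Rightarrow> bool" where
  "homogeneous_on D f \<longleftrightarrow> (\<forall>x\<in>D. \<forall>t::real. t > 0 \<longrightarrow> f (t *\<^sub>R x) = t *\<^sub>R f x)"

definition cone_spectral_radius :: "'a::real_normed_vector set \<Rightarrow> ('a \<Rightarrow> 'a) \<Rightarrow> real" where
  "cone_spectral_radius C f = Inf ((\<lambda>x. Mx C (f x) x) ` interior C)"

end

theory Submission
  imports Defs
begin


locale cs =
  fixes C :: "'a::banach set" and u :: 'a and f :: "'a \<Rightarrow> 'a"
  assumes nontriv: "(UNIV :: 'a set) \<noteq> {0}"
    and cone: "closed_cone C" and normal: "normal_cone C"
    and u: "u \<in> interior C"
    and fmaps: "\<forall>x\<in>interior C. f x \<in> C"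
    and mono: "order_preserving_on C (interior C) f"
    and hom: "homogeneous_on (interior C) f"
begin

lemma C_scale: "x \<in> C \<Longrightarrow> t \<ge> 0 \<Longrightarrow> t *\<^sub>R x \<in> C"
  using cone unfolding closed_cone_def by blast

lemma C_zero: "0 \<in> C"
proof -
  obtain x where "x \<in> C" using cone unfolding closed_cone_def by blast
  from C_scale[OF this, of 0] show ?thesis by simp
qed

lemma C_add: assumes "x \<in> C" "y \<in> C" shows "x + y \<in> C"
proof -
  have "(1/2::real) *\<^sub>R x + (1/2::real) *\<^sub>R y \<in> C"
    using cone assms unfolding closed_cone_def convex_def by (metis (no_types, lifting) field_sum_of_halves le_divide_eq_1_pos less_eq_real_def zero_less_divide_1_iff zero_less_numeral one_add_one)
  from C_scale[OF this, of 2] show ?thesis by (simp add: scaleR_add_right)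
qed

lemma C_pointed: "x \<in> C \<Longrightarrow> - x \<in> C \<Longrightarrow> x = 0"
  using cone unfolding closed_cone_def by blast

lemma intC_sub: "interior C \<subseteq> C" by (rule interior_subset)

lemma int_add: assumes x: "x \<in> interior C" and y: "y \<in> C" shows "x + y \<in> interior C"
proof -
  obtain e where e: "e > 0" "ball x e \<subseteq> C" using x by (meson mem_interior)
  have "ball (x + y) e \<subseteq> C"
  proof
    fix z assume "z \<in> ball (x + y) e"
    hence "z - y \<in> ball x e" by (simp add: dist_norm algebra_simps)
    hence "z - y \<in> C" using e by blast
    from C_add[OF this y] show "z \<in> C" by simp
  qed
  thus ?thesis using e by (meson mem_interior)
qed

lemma int_scale: assumes x: "x \<in> interior C" and t: "t > 0" shows "t *\<^sub>R x \<in> interior C"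
proof -
  obtain e where e: "e > 0" "ball x e \<subseteq> C" using x by (meson mem_interior)
  have "ball (t *\<^sub>R x) (t * e) \<subseteq> C"
  proof
    fix z assume "z \<in> ball (t *\<^sub>R x) (t*e)"
    hence "norm (t *\<^sub>R x - z) < t * e" by (simp add: dist_norm)
    moreover have "t *\<^sub>R x - z = t *\<^sub>R (x - (1/t) *\<^sub>R z)" using t by (simp add: algebra_simps)
    ultimately have "t * norm (x - (1/t) *\<^sub>R z) < t * e" using t by simp
    hence "norm (x - (1/t) *\<^sub>R z) < e" using t by simp
    hence "(1/t) *\<^sub>R z \<in> C" using e by (auto simp: dist_norm)
    from C_scale[OF this, of t] t show "z \<in> C" by simp
  qed
  thus ?thesis using e t by (meson mem_interior mult_pos_pos)
qed

lemma zero_notin_int: "0 \<notin> interior C"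
proof
  assume "0 \<in> interior C"
  then obtain e where e: "e > 0" "ball 0 e \<subseteq> C" by (meson mem_interior)
  obtain z :: 'a where z: "z \<noteq> 0" using nontriv by auto
  define w where "w = (e / (2 * norm z)) *\<^sub>R z"
  have "norm w = e/2" using z e by (simp add: w_def)
  hence "w \<in> C" "-w \<in> C" using e by auto
  hence "w = 0" by (rule C_pointed)
  thus False using z e by (simp add: w_def)
qed

lemma u_nz: "u \<noteq> 0" using u zero_notin_int by auto

lemma absorb: assumes x: "x \<in> interior C" shows "\<exists>\<beta>>0. \<beta> *\<^sub>R x - y \<in> C"
proof (cases "y = 0")
  case True thus ?thesis using x intC_sub by (intro exI[of _ 1]) auto
next
  case False
  obtain e where e: "e > 0" "ball x e \<subseteq> C" using x by (meson mem_interior)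
  define s where "s = e / (2 * norm y)"
  have s: "s > 0" using e False by (simp add: s_def)
  have "norm (s *\<^sub>R y) < e" using e False by (simp add: s_def)
  hence "x - s *\<^sub>R y \<in> C" using e by (auto simp: dist_norm)
  from C_scale[OF this, of "1/s"] s have "(1/s) *\<^sub>R x - y \<in> C"
    by (simp add: algebra_simps)
  thus ?thesis using s by (intro exI[of _ "1/s"]) auto
qed

lemma int_margin: assumes x: "x \<in> interior C" shows "\<exists>\<epsilon>>0. \<epsilon> < 1 \<and> x - \<epsilon> *\<^sub>R u \<in> C"
proof -
  obtain e where e: "e > 0" "ball x e \<subseteq> C" using x by (meson mem_interior)
  define s where "s = min (1/2) (e / (2 * norm u))"
  have s: "s > 0" "s < 1" using e u_nz by (auto simp: s_def)
  have "norm (s *\<^sub>R u) = s * norm u" using s by simp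
  also have "\<dots> \<le> (e / (2 * norm u)) * norm u" by (rule mult_right_mono) (auto simp: s_def)
  also have "\<dots> = e/2" using u_nz by simp
  finally have "norm (s *\<^sub>R u) \<le> e/2" .
  hence "x - s *\<^sub>R u \<in> C" using e by (auto simp: dist_norm)
  thus ?thesis using s by blast
qed

lemma cle_trans: "cle C x y \<Longrightarrow> cle C y z \<Longrightarrow> cle C x z"
  unfolding cle_def using C_add by (metis diff_add_cancel add.commute diff_add_eq)

lemma cle_refl: "cle C x x" by (simp add: cle_def C_zero)

lemma cle_scale: "cle C x y \<Longrightarrow> t \<ge> 0 \<Longrightarrow> cle C (t *\<^sub>R x) (t *\<^sub>R y)"
  unfolding cle_def using C_scale by (metis scaleR_diff_right)

lemma cle_add: "cle C x y \<Longrightarrow> cle C a b \<Longrightarrow> cle C (x + a) (y + b)"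
  unfolding cle_def using C_add by (metis add_diff_add)

lemma cle_scal_mono: "x \<in> C \<Longrightarrow> s \<le> t \<Longrightarrow> cle C (s *\<^sub>R x) (t *\<^sub>R x)"
  unfolding cle_def using C_scale by (metis diff_ge_0_iff_ge scaleR_diff_left)

end

context cs begin

abbreviation g where "g \<equiv> (\<lambda>x. f x + x)"

lemma g_int: "x \<in> interior C \<Longrightarrow> g x \<in> interior C"
  using fmaps int_add by (metis add.commute)

lemma g_iter_int: "x \<in> interior C \<Longrightarrow> (g ^^ k) x \<in> interior C"
  by (induction k) (auto intro: g_int)

lemma g_mono: "x \<in> interior C \<Longrightarrow> y \<in> interior C \<Longrightarrow> cle C x y \<Longrightarrow> cle C (g x) (g y)"
  using mono unfolding order_preserving_on_def by (blast intro: cle_add)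

lemma g_iter_mono: "x \<in> interior C \<Longrightarrow> y \<in> interior C \<Longrightarrow> cle C x y \<Longrightarrow> cle C ((g^^k) x) ((g^^k) y)"
  by (induction k) (auto intro: g_mono g_iter_int)

lemma g_hom: "x \<in> interior C \<Longrightarrow> t > 0 \<Longrightarrow> g (t *\<^sub>R x) = t *\<^sub>R g x"
  using hom unfolding homogeneous_on_def by (simp add: scaleR_add_right)

lemma g_iter_hom: "x \<in> interior C \<Longrightarrow> t > 0 \<Longrightarrow> (g^^k) (t *\<^sub>R x) = t *\<^sub>R (g^^k) x"
  by (induction k) (auto simp: g_hom g_iter_int)

lemma g_ge: "x \<in> interior C \<Longrightarrow> cle C x (g x)"
  using fmaps by (simp add: cle_def)

lemma g_iter_ge: "x \<in> interior C \<Longrightarrow> cle C x ((g^^k) x)"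
proof (induction k)
  case 0 then show ?case by (simp add: cle_refl)
next
  case (Suc k) then show ?case
    using g_ge[OF g_iter_int[OF Suc.prems, of k]] cle_trans by auto
qed

lemma le_C: "cle C 0 x \<Longrightarrow> x \<in> C" by (simp add: cle_def)

lemma unorm_set_ne: assumes "y \<in> C" shows "\<exists>k. k > 0 \<and> cle C (- (k *\<^sub>R u)) y \<and> cle C y (k *\<^sub>R u)"
proof -
  obtain b where b: "b > 0" "b *\<^sub>R u - y \<in> C" using absorb[OF u] by blast
  have "y - - (b *\<^sub>R u) \<in> C" using C_add[OF assms C_scale[OF intC_sub[THEN subsetD, OF u], of b]] b by simp
  thus ?thesis using b by (auto simp: cle_def)
qed

lemma U1: assumes "y \<in> C" "t > 0" "cle C y (t *\<^sub>R u)" shows "unorm C u y \<le> t"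
proof -
  have "cle C (- (t *\<^sub>R u)) y"
    using C_add[OF assms(1) C_scale[OF intC_sub[THEN subsetD, OF u], of t]] assms(2) by (simp add: cle_def)
  thus ?thesis unfolding unorm_def using assms
    by (intro cInf_lower) (auto intro: bdd_belowI[of _ 0])
qed

lemma U2: assumes "y \<in> C" "unorm C u y < t" shows "cle C y (t *\<^sub>R u)"
proof -
  let ?S = "{k. k > 0 \<and> cle C (- (k *\<^sub>R u)) y \<and> cle C y (k *\<^sub>R u)}"
  have "?S \<noteq> {}" using unorm_set_ne[OF assms(1)] by blast
  then obtain k where k: "k \<in> ?S" "k < t" using assms(2) unfolding unorm_def by (meson cInf_lessD)
  have "cle C (k *\<^sub>R u) (t *\<^sub>R u)" using k by (intro cle_scal_mono intC_sub[THEN subsetD, OF u]) auto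
  thus ?thesis using k cle_trans by blast
qed

lemma unorm_ge1: assumes "y \<in> C" "cle C u y" shows "unorm C u y \<ge> 1"
proof (rule ccontr)
  assume "\<not> ?thesis"
  then obtain t where t: "unorm C u y < t" "t < 1" by (meson dense not_le)
  have "cle C u (t *\<^sub>R u)" using U2[OF assms(1) t(1)] assms(2) cle_trans by blast
  hence "(t - 1) *\<^sub>R u \<in> C" by (simp add: cle_def algebra_simps)
  from C_scale[OF this, of "1/(1-t)"] t have "((1/(1-t)) * (t - 1)) *\<^sub>R u \<in> C"
    by simp
  moreover have "(1/(1-t)) * (t - 1) = -1" using t by (simp add: field_simps)
  ultimately have "- u \<in> C" by simp
  hence "u = 0" using C_pointed intC_sub u by blast
  thus False using u_nz by simp
qed

end

context cs begin

abbreviation r where "r \<equiv> cone_spectral_radius C f"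

lemma Mx_set_ne: "x \<in> interior C \<Longrightarrow> {\<beta>. \<beta> > 0 \<and> cle C (f x) (\<beta> *\<^sub>R x)} \<noteq> {}"
  using absorb[of x "f x"] by (auto simp: cle_def)

lemma Mx_nonneg: "x \<in> interior C \<Longrightarrow> Mx C (f x) x \<ge> 0"
  unfolding Mx_def by (rule cInf_greatest[OF Mx_set_ne]) auto

lemma Mx_le: "x \<in> interior C \<Longrightarrow> \<gamma> > 0 \<Longrightarrow> cle C (f x) (\<gamma> *\<^sub>R x) \<Longrightarrow> Mx C (f x) x \<le> \<gamma>"
  unfolding Mx_def by (rule cInf_lower) (auto intro: bdd_belowI[of _ 0])

lemma R1: assumes "x \<in> interior C" "\<gamma> > 0" "cle C (f x) (\<gamma> *\<^sub>R x)" shows "r \<le> \<gamma>"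
proof -
  have "r \<le> Mx C (f x) x" unfolding cone_spectral_radius_def
    using assms(1) Mx_nonneg by (intro cInf_lower) (auto intro: bdd_belowI[of _ 0])
  also have "\<dots> \<le> \<gamma>" by (rule Mx_le[OF assms])
  finally show ?thesis .
qed

lemma r_nonneg: "r \<ge> 0"
  unfolding cone_spectral_radius_def using u Mx_nonneg by (intro cInf_greatest) auto

lemma R2: assumes "\<epsilon> > 0" shows "\<exists>x\<in>interior C. \<exists>\<gamma>>0. \<gamma> < r + \<epsilon> \<and> cle C (f x) (\<gamma> *\<^sub>R x)"
proof -
  have "(\<lambda>x. Mx C (f x) x) ` interior C \<noteq> {}" using u by auto
  moreover have "r < r + \<epsilon>" using assms by simp
  ultimately obtain m where "m \<in> (\<lambda>x. Mx C (f x) x) ` interior C" "m < r + \<epsilon>"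
    unfolding cone_spectral_radius_def by (meson cInf_lessD)
  then obtain x where x: "x \<in> interior C" "Mx C (f x) x < r + \<epsilon>" by blast
  then obtain \<gamma> where "\<gamma> \<in> {\<beta>. \<beta> > 0 \<and> cle C (f x) (\<beta> *\<^sub>R x)}" "\<gamma> < r + \<epsilon>"
    using Mx_set_ne[OF x(1)] unfolding Mx_def by (meson cInf_lessD)
  thus ?thesis using x by blast
qed

lemma B_bound: assumes x: "x \<in> interior C" and gam: "\<gamma> > 0" and le: "cle C (f x) (\<gamma> *\<^sub>R x)"
  shows "\<exists>D>0. \<forall>k. unorm C u ((g^^k) u) \<le> D * (\<gamma> + 1) ^ k"
proof -
  obtain s where s: "s > 0" "s *\<^sub>R x - u \<in> C" using absorb[OF x] by blast
  obtain t where t: "t > 0" "t *\<^sub>R u - x \<in> C" using absorb[OF u] by blast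
  have gx: "cle C (g x) ((\<gamma>+1) *\<^sub>R x)" using le by (simp add: cle_def algebra_simps)
  have it: "cle C ((g^^k) x) (((\<gamma>+1)^k) *\<^sub>R x)" for k
  proof (induction k)
    case 0 then show ?case by (simp add: cle_refl)
  next
    case (Suc k)
    have "cle C (g ((g^^k) x)) (g (((\<gamma>+1)^k) *\<^sub>R x))"
      using Suc g_iter_int[OF x] int_scale[OF x] gam by (intro g_mono) auto
    also have "g (((\<gamma>+1)^k) *\<^sub>R x) = ((\<gamma>+1)^k) *\<^sub>R g x" using g_hom[OF x] gam by simp
    finally have 1: "cle C ((g^^Suc k) x) (((\<gamma>+1)^k) *\<^sub>R g x)" by simp
    have "cle C (((\<gamma>+1)^k) *\<^sub>R g x) (((\<gamma>+1)^k) *\<^sub>R ((\<gamma>+1) *\<^sub>R x))"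
      using gx gam by (intro cle_scale) auto
    with 1 show ?case using cle_trans by (simp add: mult.commute)
  qed
  show ?thesis
  proof (intro exI[of _ "s*t"] conjI allI)
    show "s * t > 0" using s t by simp
    fix k
    have "cle C ((g^^k) u) ((g^^k) (s *\<^sub>R x))"
      using s u int_scale[OF x s(1)] by (intro g_iter_mono) (auto simp: cle_def)
    also have "(g^^k) (s *\<^sub>R x) = s *\<^sub>R (g^^k) x" using g_iter_hom[OF x s(1)] .
    finally have 1: "cle C ((g^^k) u) (s *\<^sub>R (g^^k) x)" .
    have 2: "cle C (s *\<^sub>R (g^^k) x) (s *\<^sub>R (((\<gamma>+1)^k) *\<^sub>R x))" using it s by (intro cle_scale) auto
    have 3: "cle C (s *\<^sub>R (((\<gamma>+1)^k) *\<^sub>R x)) ((s * (\<gamma>+1)^k) *\<^sub>R (t *\<^sub>R u))"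
    proof -
      have "(s * (\<gamma>+1)^k) *\<^sub>R (t *\<^sub>R u - x) \<in> C" using t s gam by (intro C_scale) auto
      thus ?thesis by (simp add: cle_def algebra_simps)
    qed
    have "cle C ((g^^k) u) ((s * t * (\<gamma>+1)^k) *\<^sub>R u)"
      using cle_trans[OF cle_trans[OF 1 2] 3] by (simp add: mult_ac)
    thus "unorm C u ((g^^k) u) \<le> s * t * (\<gamma>+1)^k"
      using gam s t by (intro U1 intC_sub[THEN subsetD] g_iter_int u) auto
  qed
qed

end

context cs begin

lemma key_upper:
  assumes K: "K \<ge> 1" and t: "t > 0" "cle C ((g^^K) u) (t *\<^sub>R u)" and \<beta>: "\<beta> > 1" "t < \<beta>^K"
  shows "r \<le> \<beta> - 1"
proof -
  have uC: "u \<in> C" using u intC_sub by blast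
  define h where "h = (\<lambda>x. u + (1/\<beta>) *\<^sub>R g x)"
  have h_int: "h y \<in> interior C" if "y \<in> interior C" for y
    unfolding h_def using \<beta> by (intro int_add[OF u] C_scale intC_sub[THEN subsetD] g_int that) auto
  have h_iter_int: "(h^^n) y \<in> interior C" if "y \<in> interior C" for y n
    using that by (induction n) (auto intro: h_int)
  have h_mono: "cle C (h y) (h z)" if "y \<in> interior C" "z \<in> interior C" "cle C y z" for y z
    unfolding h_def using \<beta> by (intro cle_add cle_refl cle_scale g_mono that) auto
  define x where "x n = (h^^n) u" for n
  have x_int: "x n \<in> interior C" for n unfolding x_def by (rule h_iter_int[OF u])
  have x_Suc: "x (Suc n) = h (x n)" for n by (simp add: x_def)
  have x_inc: "cle C (x n) (x (Suc n))" for n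
  proof (induction n)
    case 0
    have "x 1 - x 0 = (1/\<beta>) *\<^sub>R g u" by (simp add: x_def h_def)
    moreover have "(1/\<beta>) *\<^sub>R g u \<in> C" using \<beta> by (intro C_scale intC_sub[THEN subsetD] g_int u) auto
    ultimately show ?case by (simp add: cle_def)
  next
    case (Suc n)
    have "cle C (h (x n)) (h (x (Suc n)))" by (rule h_mono[OF x_int x_int Suc.IH])
    thus ?case by (simp only: x_Suc)
  qed
  have x_mono: "cle C (x n) (x m)" if "n \<le> m" for n m
    using that
  proof (induction m rule: dec_induct)
    case base thus ?case by (rule cle_refl)
  next
    case (step m) thus ?case using cle_trans[OF step.IH x_inc] by simp
  qed
  define B where "B = 1 / (\<beta> - 1)"
  define q where "q = t / \<beta>^K"
  define c where "c = (1 + B * t) / (1 - q)"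
  have B0: "B > 0" using \<beta> by (simp add: B_def)
  have B_eq: "(1 + B) / \<beta> = B" using \<beta> by (simp add: B_def field_simps)
  have bK: "\<beta>^K > 0" using \<beta> by simp
  have q: "q > 0" "q < 1" using t \<beta> bK by (auto simp: q_def)
  have c1: "c \<ge> 1" unfolding c_def using q B0 t by (simp add: field_simps)
  have c_eq: "1 + (B + c / \<beta>^K) * t = c"
  proof -
    have "(B + c / \<beta>^K) * t = B * t + c * q" using bK by (simp add: q_def field_simps)
    moreover have "c * (1 - q) = 1 + B * t" using q by (simp add: c_def)
    ultimately show ?thesis by (simp add: algebra_simps)
  qed
  have iter_bound: "cle C ((h^^Suc m) y) (u + (B + c/\<beta>^Suc m) *\<^sub>R (g^^Suc m) u)"
    if y: "y \<in> interior C" "cle C y (c *\<^sub>R u)" for y m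
  proof (induction m)
    case 0
    have "cle C (g y) (g (c *\<^sub>R u))" using y c1 by (intro g_mono int_scale u) auto
    also have "g (c *\<^sub>R u) = c *\<^sub>R g u" using g_hom[OF u] c1 by simp
    finally have "cle C ((1/\<beta>) *\<^sub>R g y) ((1/\<beta>) *\<^sub>R (c *\<^sub>R g u))" using \<beta> by (intro cle_scale) auto
    moreover have "cle C ((1/\<beta>) *\<^sub>R (c *\<^sub>R g u)) ((B + c/\<beta>) *\<^sub>R g u)"
      using B0 \<beta> by (simp add: scaleR_scaleR) (intro cle_scal_mono intC_sub[THEN subsetD] g_int u, simp)
    ultimately have "cle C ((1/\<beta>) *\<^sub>R g y) ((B + c/\<beta>) *\<^sub>R g u)" by (rule cle_trans)
    hence "cle C (u + (1/\<beta>) *\<^sub>R g y) (u + (B + c/\<beta>) *\<^sub>R g u)" by (intro cle_add cle_refl)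
    thus ?case by (simp add: h_def)
  next
    case (Suc m)
    define s where "s = B + c/\<beta>^Suc m"
    have s0: "s \<ge> 0" using B0 c1 \<beta> by (simp add: s_def)
    let ?w = "(g^^Suc m) u"
    have w_int: "?w \<in> interior C" by (rule g_iter_int[OF u])
    have "cle C u ?w" by (rule g_iter_ge[OF u])
    hence a1: "cle C (u + s *\<^sub>R ?w) (?w + s *\<^sub>R ?w)" by (intro cle_add cle_refl)
    have eq1: "?w + s *\<^sub>R ?w = (1 + s) *\<^sub>R ?w" by (simp add: algebra_simps)
    have a2: "cle C ((h^^Suc m) y) (u + s *\<^sub>R ?w)" using Suc.IH unfolding s_def by assumption
    have "cle C ((h^^Suc m) y) ((1 + s) *\<^sub>R ?w)" using cle_trans[OF a2 a1] unfolding eq1 .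
    hence "cle C (g ((h^^Suc m) y)) (g ((1 + s) *\<^sub>R ?w))"
      using s0 by (intro g_mono h_iter_int y int_scale w_int) auto
    also have "g ((1 + s) *\<^sub>R ?w) = (1 + s) *\<^sub>R g ?w" using g_hom[OF w_int] s0 by simp
    finally have "cle C ((1/\<beta>) *\<^sub>R g ((h^^Suc m) y)) ((1/\<beta>) *\<^sub>R ((1 + s) *\<^sub>R g ?w))"
      using \<beta> by (intro cle_scale) auto
    hence "cle C (h ((h^^Suc m) y)) (u + ((1 + s)/\<beta>) *\<^sub>R g ?w)"
      unfolding h_def by (intro cle_add cle_refl) (simp add: scaleR_scaleR)
    moreover have "(1 + s)/\<beta> = B + c/\<beta>^Suc (Suc m)"
    proof -
      have "(1 + s)/\<beta> = (1 + B)/\<beta> + c/\<beta>^Suc (Suc m)" by (simp add: s_def add_divide_distrib)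
      thus ?thesis using B_eq by simp
    qed
    ultimately show ?case by simp
  qed
  have hK: "cle C ((h^^K) y) (c *\<^sub>R u)" if y: "y \<in> interior C" "cle C y (c *\<^sub>R u)" for y
  proof -
    obtain m where m: "K = Suc m" using K by (cases K) auto
    have 1: "cle C ((h^^K) y) (u + (B + c/\<beta>^K) *\<^sub>R (g^^K) u)" using iter_bound[OF y] m by simp
    have "cle C ((B + c/\<beta>^K) *\<^sub>R (g^^K) u) ((B + c/\<beta>^K) *\<^sub>R (t *\<^sub>R u))"
      using B0 c1 bK by (intro cle_scale t) auto
    hence "cle C (u + (B + c/\<beta>^K) *\<^sub>R (g^^K) u) (u + (B + c/\<beta>^K) *\<^sub>R (t *\<^sub>R u))"
      by (intro cle_add cle_refl)
    moreover have "u + (B + c/\<beta>^K) *\<^sub>R (t *\<^sub>R u) = (1 + (B + c/\<beta>^K) * t) *\<^sub>R u"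
      by (simp add: algebra_simps)
    ultimately have "cle C (u + (B + c/\<beta>^K) *\<^sub>R (g^^K) u) (c *\<^sub>R u)" using c_eq by simp
    from cle_trans[OF 1 this] show ?thesis .
  qed
  have x_mult: "cle C (x (n*K)) (c *\<^sub>R u)" for n
  proof (induction n)
    case 0 thus ?case using c1 uC cle_scal_mono[of u 1 c] by (simp add: x_def)
  next
    case (Suc n)
    have "x (Suc n * K) = (h^^K) (x (n*K))" by (simp add: x_def funpow_add add.commute)
    thus ?case using hK[OF x_int Suc] by simp
  qed
  have x_bdd: "cle C (x n) (c *\<^sub>R u)" for n
  proof -
    have m: "n mod K < K" using K by simp
    have e: "n = n div K * K + n mod K" by simp
    have "(n div K + 1) * K = n div K * K + K" by simp
    hence "n \<le> (n div K + 1) * K" using m e by linarith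
    from cle_trans[OF x_mono[OF this] x_mult] show ?thesis .
  qed
  obtain A where A: "A > 0" "A *\<^sub>R u - g u \<in> C" using absorb[OF u] by blast
  define L where "L = A / \<beta>"
  define \<theta> where "\<theta> = 1 - 1/c"
  have L0: "L > 0" using A \<beta> by (simp add: L_def)
  have th: "\<theta> \<ge> 0" "\<theta> < 1" using c1 by (auto simp: \<theta>_def)
  have contr: "cle C (x (Suc n)) ((1 + L * \<theta>^n) *\<^sub>R x n)" for n
  proof (induction n)
    case 0
    have "cle C ((1/\<beta>) *\<^sub>R g u) ((1/\<beta>) *\<^sub>R (A *\<^sub>R u))" using A \<beta> by (intro cle_scale) (auto simp: cle_def)
    hence "cle C (u + (1/\<beta>) *\<^sub>R g u) (u + (1/\<beta>) *\<^sub>R (A *\<^sub>R u))" by (intro cle_add cle_refl)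
    thus ?case by (simp add: x_def h_def L_def algebra_simps)
  next
    case (Suc n)
    define lam where "lam = 1 + L * \<theta>^n"
    have lam: "lam \<ge> 1" using L0 th by (simp add: lam_def)
    let ?x' = "x (Suc n)"
    have "cle C (g ?x') (g (lam *\<^sub>R x n))" using Suc lam by (intro g_mono x_int int_scale) (auto simp: lam_def)
    also have "g (lam *\<^sub>R x n) = lam *\<^sub>R g (x n)" using g_hom[OF x_int] lam by simp
    finally have "cle C ((1/\<beta>) *\<^sub>R g ?x') ((1/\<beta>) *\<^sub>R (lam *\<^sub>R g (x n)))" using \<beta> by (intro cle_scale) auto
    hence 1: "cle C (x (Suc (Suc n))) (u + lam *\<^sub>R ((1/\<beta>) *\<^sub>R g (x n)))"
      unfolding x_Suc[of "Suc n"] h_def by (intro cle_add cle_refl) (simp add: scaleR_scaleR mult.commute)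
    have gx: "(1/\<beta>) *\<^sub>R g (x n) = ?x' - u" by (simp add: x_Suc h_def)
    have sc: "1 + L * \<theta>^Suc n = lam - L * \<theta>^n / c" using c1 by (simp add: lam_def \<theta>_def field_simps)
    have "(1 + L * \<theta>^Suc n) *\<^sub>R ?x' - (u + lam *\<^sub>R (?x' - u)) = (L * \<theta>^n / c) *\<^sub>R (c *\<^sub>R u - ?x')"
      using c1 unfolding sc by (simp add: algebra_simps lam_def)
    moreover have "(L * \<theta>^n / c) *\<^sub>R (c *\<^sub>R u - ?x') \<in> C"
      using x_bdd L0 th c1 by (intro C_scale) (auto simp: cle_def)
    ultimately have "cle C (u + lam *\<^sub>R (?x' - u)) ((1 + L * \<theta>^Suc n) *\<^sub>R ?x')" by (simp add: cle_def)
    from cle_trans[OF 1[unfolded gx] this] show ?case .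
  qed
  have rle: "r \<le> \<beta> * (1 + L * \<theta>^n) - 1" for n
  proof (rule R1[OF x_int])
    have "\<beta> * (1 + L * \<theta>^n) \<ge> \<beta>" using \<beta> L0 th by simp
    thus "\<beta> * (1 + L * \<theta>^n) - 1 > 0" using \<beta> by linarith
    have xs: "x (Suc n) = u + (1/\<beta>) *\<^sub>R (f (x n) + x n)" by (simp add: x_Suc h_def)
    have "(\<beta> * (1 + L * \<theta>^n) - 1) *\<^sub>R x n - f (x n)
          = \<beta> *\<^sub>R ((1 + L * \<theta>^n) *\<^sub>R x n - x (Suc n)) + \<beta> *\<^sub>R u"
      using \<beta> unfolding xs by (simp add: algebra_simps)
    moreover have "\<beta> *\<^sub>R ((1 + L * \<theta>^n) *\<^sub>R x n - x (Suc n)) + \<beta> *\<^sub>R u \<in> C"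
      using contr \<beta> uC by (intro C_add C_scale) (auto simp: cle_def)
    ultimately show "cle C (f (x n)) ((\<beta> * (1 + L * \<theta>^n) - 1) *\<^sub>R x n)" by (simp add: cle_def)
  qed
  have "(\<lambda>n. \<beta> * (1 + L * \<theta>^n) - 1) \<longlonglongrightarrow> \<beta> * (1 + L * 0) - 1"
    using th by (intro tendsto_intros LIMSEQ_power_zero) auto
  thus ?thesis using rle by (intro LIMSEQ_le_const) auto
qed

end

context cs begin

abbreviation y where "y k \<equiv> (g^^k) u"
abbreviation a where "a k \<equiv> unorm C u (y k)"

lemma yC: "y k \<in> C" using g_iter_int[OF u] intC_sub by blast

lemma a_ge1: "a k \<ge> 1" by (rule unorm_ge1[OF yC g_iter_ge[OF u]])

lemma powr_pow_inv: assumes "(b::real) > 0" "k \<ge> 1" shows "(b powr (1 / real k)) ^ k = b"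
proof -
  have "(b powr (1 / real k)) ^ k = (b powr (1 / real k)) powr (real k)"
    using assms by (simp add: powr_realpow)
  also have "\<dots> = b powr 1" using assms by (simp add: powr_powr)
  finally show ?thesis using assms by simp
qed

lemma pow_powr_inv: assumes "(b::real) > 0" "k \<ge> 1" shows "(b ^ k) powr (1 / real k) = b"
proof -
  have "(b ^ k) powr (1 / real k) = (b powr real k) powr (1 / real k)"
    using assms by (simp add: powr_realpow)
  also have "\<dots> = b powr 1" using assms by (simp add: powr_powr)
  finally show ?thesis using assms by simp
qed

lemma lowerA: assumes k: "k \<ge> 1" shows "r + 1 \<le> a k powr (1 / real k)"
proof (rule ccontr)
  define \<alpha> where "\<alpha> = a k powr (1 / real k)"
  assume "\<not> ?thesis"
  hence lt: "\<alpha> < r + 1" by (simp add: \<alpha>_def)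
  have a0: "a k > 0" using a_ge1 by (smt (verit))
  have al1: "\<alpha> \<ge> 1" unfolding \<alpha>_def using a_ge1 k by (simp add: ge_one_powr_ge_zero)
  define \<beta> where "\<beta> = (\<alpha> + (r + 1)) / 2"
  have b: "\<alpha> < \<beta>" "\<beta> < r + 1" using lt by (auto simp: \<beta>_def)
  have "\<alpha> ^ k < \<beta> ^ k" using b al1 k by (intro power_strict_mono) auto
  hence ak: "a k < \<beta> ^ k" using powr_pow_inv[OF a0 k] by (simp add: \<alpha>_def)
  define t where "t = (a k + \<beta> ^ k) / 2"
  have t: "a k < t" "t < \<beta>^k" "t > 0" using ak a0 by (auto simp: t_def)
  have "cle C (y k) (t *\<^sub>R u)" by (rule U2[OF yC t(1)])
  from key_upper[OF k t(3) this _ t(2)] b al1 have "r \<le> \<beta> - 1" by simp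
  thus False using b by simp
qed

lemma upperB: assumes e: "\<epsilon> > 0" shows "\<exists>N. \<forall>k\<ge>N. a k powr (1 / real k) \<le> r + 1 + \<epsilon>"
proof -
  obtain x \<gamma> where x: "x \<in> interior C" "\<gamma> > 0" "\<gamma> < r + \<epsilon>/2" "cle C (f x) (\<gamma> *\<^sub>R x)"
    using R2[of "\<epsilon>/2"] e by auto
  obtain D where D: "D > 0" "\<And>k. a k \<le> D * (\<gamma> + 1) ^ k" using B_bound[OF x(1,2,4)] by blast
  define \<mu> where "\<mu> = \<gamma> + 1"
  have mu: "\<mu> > 0" using x by (simp add: \<mu>_def)
  have "(\<lambda>k. D powr (1 / real k)) \<longlonglongrightarrow> D powr 0"
    using D by (intro tendsto_powr tendsto_const lim_1_over_n) auto
  hence "(\<lambda>k. D powr (1 / real k)) \<longlonglongrightarrow> 1" using D by simp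
  moreover have "1 < 1 + \<epsilon> / (2 * \<mu>)" using e mu by simp
  ultimately have "eventually (\<lambda>k. D powr (1 / real k) < 1 + \<epsilon> / (2 * \<mu>)) sequentially"
    by (rule order_tendstoD(2))
  then obtain N where N: "\<And>k. k \<ge> N \<Longrightarrow> D powr (1 / real k) < 1 + \<epsilon> / (2 * \<mu>)"
    by (auto simp: eventually_sequentially)
  show ?thesis
  proof (intro exI[of _ "max N 1"] allI impI)
    fix k assume k: "max N 1 \<le> k"
    have "a k powr (1 / real k) \<le> (D * \<mu> ^ k) powr (1 / real k)"
      using D a_ge1[of k] by (intro powr_mono2) (auto simp: \<mu>_def)
    also have "\<dots> = D powr (1 / real k) * \<mu>" using mu k by (simp add: powr_mult pow_powr_inv)
    also have "\<dots> \<le> (1 + \<epsilon> / (2 * \<mu>)) * \<mu>" using N[of k] k mu by (intro mult_right_mono) auto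
    also have "\<dots> = \<mu> + \<epsilon> / 2" using mu by (simp add: field_simps)
    also have "\<dots> \<le> r + 1 + \<epsilon>" using x by (simp add: \<mu>_def)
    finally show "a k powr (1 / real k) \<le> r + 1 + \<epsilon>" .
  qed
qed

lemma conv: "(\<lambda>k. a k powr (1 / real k)) \<longlonglongrightarrow> r + 1"
proof (rule LIMSEQ_I)
  fix e :: real assume e: "e > 0"
  obtain N where N: "\<And>k. k \<ge> N \<Longrightarrow> a k powr (1 / real k) \<le> r + 1 + e/2" using upperB[of "e/2"] e by auto
  show "\<exists>N. \<forall>k\<ge>N. norm (a k powr (1 / real k) - (r + 1)) < e"
  proof (intro exI[of _ "max N 1"] allI impI)
    fix k assume k: "max N 1 \<le> k"
    have "r + 1 \<le> a k powr (1 / real k)" using lowerA k by simp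
    thus "norm (a k powr (1 / real k) - (r + 1)) < e" using N[of k] k e by simp
  qed
qed

lemma norm_bounds: "\<exists>\<delta> K0. \<delta> > 0 \<and> K0 > 0 \<and> (\<forall>k. \<delta> * a k \<le> norm (y k) \<and> norm (y k) \<le> K0 * a k)"
proof -
  obtain \<kappa> where kap: "\<And>x z. cle C 0 x \<Longrightarrow> cle C x z \<Longrightarrow> norm x \<le> \<kappa> * norm z"
    using normal unfolding normal_cone_def by blast
  have uC: "u \<in> C" using u intC_sub by blast
  have "norm u \<le> \<kappa> * norm u" using kap[of u u] uC C_zero by (simp add: cle_def)
  hence k1: "\<kappa> \<ge> 1" using u_nz by simp
  obtain e where e: "e > 0" "ball u e \<subseteq> C" using u by (meson mem_interior)
  define \<delta> where "\<delta> = e / 2"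
  define K0 where "K0 = \<kappa> * norm u"
  have K0: "K0 > 0" using k1 u_nz by (simp add: K0_def)
  have yne: "y k \<noteq> 0" for k
  proof
    assume "y k = 0"
    hence "- u \<in> C" using g_iter_ge[OF u, of k] by (simp add: cle_def)
    thus False using C_pointed uC u_nz by blast
  qed
  have low: "\<delta> * a k \<le> norm (y k)" for k
  proof -
    define s where "s = \<delta> / norm (y k)"
    have s: "s > 0" using yne e by (simp add: s_def \<delta>_def)
    have "norm (s *\<^sub>R y k) = \<delta>" using yne e by (simp add: s_def \<delta>_def)
    hence "u - s *\<^sub>R y k \<in> C" using e by (auto simp: dist_norm \<delta>_def)
    from C_scale[OF this, of "1/s"] s have "(1/s) *\<^sub>R u - y k \<in> C" by (simp add: algebra_simps)
    hence "a k \<le> 1/s" using s by (intro U1 yC) (auto simp: cle_def)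
    thus ?thesis using s yne e by (simp add: s_def \<delta>_def field_simps)
  qed
  have up: "norm (y k) \<le> K0 * a k" for k
  proof (rule field_le_epsilon)
    fix \<epsilon> :: real assume ep: "\<epsilon> > 0"
    define t where "t = a k + \<epsilon> / K0"
    have "a k < t" using ep K0 by (simp add: t_def)
    hence "cle C (y k) (t *\<^sub>R u)" by (rule U2[OF yC])
    hence "norm (y k) \<le> \<kappa> * norm (t *\<^sub>R u)" using yC by (intro kap) (auto simp: cle_def)
    also have "\<dots> = K0 * t" using a_ge1[of k] ep K0 by (simp add: K0_def t_def)
    also have "\<dots> = K0 * a k + \<epsilon>" using K0 by (simp add: t_def field_simps)
    finally show "norm (y k) \<le> K0 * a k + \<epsilon>" .
  qed
  show ?thesis using low up K0 e by (intro exI[of _ \<delta>] exI[of _ K0]) (auto simp: \<delta>_def)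
qed

lemma conv_norm: "(\<lambda>k. norm (y k) powr (1 / real k)) \<longlonglongrightarrow> r + 1"
proof -
  obtain \<delta> K0 where b: "\<delta> > 0" "K0 > 0" "\<And>k. \<delta> * a k \<le> norm (y k)" "\<And>k. norm (y k) \<le> K0 * a k"
    using norm_bounds by blast
  have lim: "(\<lambda>k. c powr (1 / real k) * a k powr (1 / real k)) \<longlonglongrightarrow> 1 * (r + 1)" if "c > 0" for c :: real
  proof -
    have "(\<lambda>k. c powr (1 / real k)) \<longlonglongrightarrow> c powr 0"
      using that by (intro tendsto_powr tendsto_const lim_1_over_n) auto
    thus ?thesis using that by (intro tendsto_mult conv) auto
  qed
  show ?thesis
  proof (rule real_tendsto_sandwich)
    have a0: "0 \<le> a k" for k using a_ge1[of k] by linarith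
    show "eventually (\<lambda>k. \<delta> powr (1 / real k) * a k powr (1 / real k) \<le> norm (y k) powr (1 / real k)) sequentially"
      using b a0 by (intro always_eventually allI) (auto simp: powr_mult[symmetric] intro!: powr_mono2)
    show "eventually (\<lambda>k. norm (y k) powr (1 / real k) \<le> K0 powr (1 / real k) * a k powr (1 / real k)) sequentially"
      using b a0 by (intro always_eventually allI) (auto simp: powr_mult[symmetric] intro!: powr_mono2)
    show "(\<lambda>k. \<delta> powr (1 / real k) * a k powr (1 / real k)) \<longlonglongrightarrow> r + 1" using lim[OF b(1)] by simp
    show "(\<lambda>k. K0 powr (1 / real k) * a k powr (1 / real k)) \<longlonglongrightarrow> r + 1" using lim[OF b(2)] by simp
  qed
qed

lemma inf_eq: "Inf {a k powr (1 / real k) | k::nat. k > 0} = r + 1"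
proof (rule antisym)
  let ?S = "{a k powr (1 / real k) | k::nat. k > 0}"
  have ne: "?S \<noteq> {}" by blast
  have bdd: "bdd_below ?S" by (rule bdd_belowI[of _ 0]) auto
  show "r + 1 \<le> Inf ?S" using ne lowerA by (intro cInf_greatest) auto
  show "Inf ?S \<le> r + 1"
  proof (rule field_le_epsilon)
    fix e :: real assume "e > 0"
    then obtain N where N: "\<And>k. k \<ge> N \<Longrightarrow> a k powr (1 / real k) \<le> r + 1 + e" using upperB by blast
    have "Inf ?S \<le> a (max N 1) powr (1 / real (max N 1))" using bdd by (intro cInf_lower) auto
    also have "\<dots> \<le> r + 1 + e" by (rule N) simp
    finally show "Inf ?S \<le> r + 1 + e" .
  qed
qed

lemma last_part: "r < 1 \<longleftrightarrow> (\<exists>k::nat. cll C (y k) ((2::real) ^ k *\<^sub>R u))"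
proof
  assume r1: "r < 1"
  obtain N where N: "\<And>k. k \<ge> N \<Longrightarrow> a k powr (1 / real k) \<le> r + 1 + (1 - r)/2"
    using upperB[of "(1 - r)/2"] r1 by auto
  define k where "k = max N 1"
  define \<beta> where "\<beta> = r + 1 + (1 - r)/2"
  have k: "k \<ge> 1" "k \<ge> N" by (auto simp: k_def)
  have b: "\<beta> < 2" "\<beta> > 0" unfolding \<beta>_def using r1 r_nonneg by (simp_all add: field_simps)
  have a0: "a k > 0" using a_ge1[of k] by linarith
  have "a k powr (1 / real k) \<le> \<beta>" using N[OF k(2)] by (simp add: \<beta>_def)
  hence "(a k powr (1 / real k)) ^ k \<le> \<beta> ^ k" by (intro power_mono) auto
  moreover have "\<beta> ^ k < 2 ^ k" using b k by (intro power_strict_mono) auto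
  ultimately have ak: "a k < 2 ^ k" using powr_pow_inv[OF a0 k(1)] by simp
  define t where "t = (a k + 2 ^ k) / 2"
  have t: "a k < t" "t < 2 ^ k" using ak by (auto simp: t_def)
  have "cle C (y k) (t *\<^sub>R u)" by (rule U2[OF yC t(1)])
  hence "(2 ^ k - t) *\<^sub>R u + (t *\<^sub>R u - y k) \<in> interior C"
    using t by (intro int_add int_scale u) (auto simp: cle_def)
  hence "cll C (y k) ((2::real) ^ k *\<^sub>R u)" by (simp add: cll_def algebra_simps)
  thus "\<exists>k::nat. cll C (y k) ((2::real) ^ k *\<^sub>R u)" by blast
next
  assume "\<exists>k::nat. cll C (y k) ((2::real) ^ k *\<^sub>R u)"
  then obtain k where kk: "(2::real) ^ k *\<^sub>R u - y k \<in> interior C" by (auto simp: cll_def)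
  have k: "k \<ge> 1"
  proof (rule ccontr)
    assume "\<not> k \<ge> 1" hence "k = 0" by simp
    thus False using kk zero_notin_int by simp
  qed
  obtain \<epsilon> where ep: "\<epsilon> > 0" "\<epsilon> < 1" "((2::real) ^ k *\<^sub>R u - y k) - \<epsilon> *\<^sub>R u \<in> C"
    using int_margin[OF kk] by blast
  have two: "(2::real) ^ k \<ge> 2" using k by (metis power_increasing power_one_right one_le_numeral)
  have "cle C (y k) ((2 ^ k - \<epsilon>) *\<^sub>R u)" using ep by (simp add: cle_def algebra_simps)
  hence "a k \<le> 2 ^ k - \<epsilon>" using ep two by (intro U1 yC) auto
  hence "a k < 2 ^ k" using ep by simp
  hence "a k powr (1 / real k) < (2 ^ k) powr (1 / real k)"
    using a_ge1[of k] k by (intro powr_less_mono2) auto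
  also have "\<dots> = 2" using k by (simp add: pow_powr_inv)
  finally show "r < 1" using lowerA[OF k] by simp
qed

end

theorem proposition4p10:
  fixes C :: "'a::banach set" and u :: 'a and f :: "'a \<Rightarrow> 'a"
  assumes nontriv: "(UNIV :: 'a set) \<noteq> {0}"
    and cone: "closed_cone C" and normal: "normal_cone C"
    and int_ne: "interior C \<noteq> {}"
    and u: "u \<in> interior C"
    and fmaps: "\<forall>x\<in>interior C. f x \<in> C"
    and mono: "order_preserving_on C (interior C) f"
    and hom: "homogeneous_on (interior C) f"
  shows "((\<lambda>k. unorm C u (((\<lambda>x. f x + x) ^^ k) u) powr (1 / real k) - 1)
            \<longlonglongrightarrow> cone_spectral_radius C f)
    \<and> cone_spectral_radius C f
        = Inf {unorm C u (((\<lambda>x. f x + x) ^^ k) u) powr (1 / real k) | k::nat. k > 0} - 1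
    \<and> ((\<lambda>k. norm (((\<lambda>x. f x + x) ^^ k) u) powr (1 / real k) - 1)
            \<longlonglongrightarrow> cone_spectral_radius C f)
    \<and> (cone_spectral_radius C f < 1 \<longleftrightarrow>
        (\<exists>k::nat. cll C (((\<lambda>x. f x + x) ^^ k) u) ((2::real) ^ k *\<^sub>R u)))"
proof -
  interpret cs C u f using assms by unfold_locales
  have 1: "((\<lambda>k. unorm C u (((\<lambda>x. f x + x) ^^ k) u) powr (1 / real k) - 1)
            \<longlonglongrightarrow> (cone_spectral_radius C f + 1) - 1)"
    by (intro tendsto_diff conv tendsto_const)
  have 3: "((\<lambda>k. norm (((\<lambda>x. f x + x) ^^ k) u) powr (1 / real k) - 1)
            \<longlonglongrightarrow> (cone_spectral_radius C f + 1) - 1)"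
    by (intro tendsto_diff conv_norm tendsto_const)
  show ?thesis using 1 3 inf_eq last_part by simp
qed


end
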